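(* Let $\rho\colon\mathrm{Isom}(\mathbf H^1_{\mathbb C})_o\to\mathrm{Isom}(\mathbf H^\infty_{\mathbb C})_o$ be a non-elementary representation with $\mathrm{Arg}(\rho)=\pi/2$. Then $\rho$ preserves a complex hyperbolic subspace of $\mathbf H^\infty_{\mathbb C}$ isometric to $\mathbf H^1_{\mathbb C}$.
   Context: $\mathcal H$: separable complex Hilbert space with strongly non-degenerate Hermitian form $B$ (linear in first variable) of signature $(1,\infty)$; $\mathbf H^\infty_{\mathbb C}=\{[v]:B(v,v)>0\}$, $\cosh d([v],[w])=|B(v,w)|/\sqrt{B(v,v)B(w,w)}$, boundary = isotropic lines, $\mathrm{Isom}(\mathbf H^\infty_{\mathbb C})_o=PU(B)$; complex hyperbolic subspaces are projectivizations of closed complex subspaces of signature $(1,m')$. $\mathbf H^1_{\mathbb C}$: $\mathbb C^2$ with $B(z,w)=z_1\bar w_1-z_2\bar w_2$, $\xi_{1,2}=(e_1\pm e_2)/\sqrt2$; $g(\lambda,b)\in SU(1,1)$ has matrix $\begin{pmatrix}\lambda&ib\\0&\lambda^{-1}\end{pmatrix}$ in basis $(\xi_1,\xi_2)$. Representations are orbitally continuous; non-elementary = no fixed point in $\mathbf H^\infty_{\mathbb C}\cup\partial\mathbf H^\infty_{\mathbb C}$ and no invariant pair of boundary points. For such $\rho$: $\eta_1$ = unique common fixed boundary point of the $\rho(g(\lambda,b))$, $\eta_2$ = other endpoint of the common axis of the hyperbolic $\rho(g(\lambda,0))$, $\lambda\neq1$; isotropic representatives with $B(\eta_1,\eta_2)=1$;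 $E=\eta_1^\perp\cap\eta_2^\perp$. The lift $T_b\in U(B)$ of $\rho(g(1,b))$ with $T_b\eta_1=\eta_1$ satisfies $T_b\eta_2=K(b)\eta_1+\eta_2+c(b)$, $K(b)\in\mathbb C$, $c(b)\in E$. $\mathrm{Arg}(\rho)$ is the argument of $K(1)$ (it lies in $[0,\pi/2]$ and is independent of choices). *)

theory Defs
  imports "HOL-Analysis.Analysis"
begin

text \<open>Model of the ambient space: the separable Hilbert space of square-summable
  sequences v :: nat => complex, with the Hermitian form of signature (1,infinity)
  B(v,w) = v0 conj(w0) - sum_{n>=1} v_n conj(w_n). Every separable complex Hilbert space
  with a strongly non-degenerate Hermitian form of signature (1,infinity) is isomorphic to
  this model.\<close>

definition Hsp :: "(nat \<Rightarrow> complex) set" where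
  "Hsp = {f. summable (\<lambda>n. (cmod (f n))\<^sup>2)}"

definition Bf :: "(nat \<Rightarrow> complex) \<Rightarrow> (nat \<Rightarrow> complex) \<Rightarrow> complex" where
  "Bf f g = f 0 * cnj (g 0) - (\<Sum>n. f (Suc n) * cnj (g (Suc n)))"

definition vsmul :: "complex \<Rightarrow> (nat \<Rightarrow> complex) \<Rightarrow> (nat \<Rightarrow> complex)" where
  "vsmul c f = (\<lambda>n. c * f n)"

definition vadd :: "(nat \<Rightarrow> complex) \<Rightarrow> (nat \<Rightarrow> complex) \<Rightarrow> (nat \<Rightarrow> complex)" where
  "vadd f g = (\<lambda>n. f n + g n)"

definition in_UB :: "((nat \<Rightarrow> complex) \<Rightarrow> (nat \<Rightarrow> complex)) \<Rightarrow> bool" where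
  "in_UB T \<longleftrightarrow> bij_betw T Hsp Hsp
     \<and> (\<forall>v\<in>Hsp. \<forall>w\<in>Hsp. \<forall>a b. T (vadd (vsmul a v) (vsmul b w)) = vadd (vsmul a (T v)) (vsmul b (T w)))
     \<and> (\<forall>v\<in>Hsp. \<forall>w\<in>Hsp. Bf (T v) (T w) = Bf v w)"

definition B1 :: "complex^2 \<Rightarrow> complex^2 \<Rightarrow> complex" where
  "B1 z w = z$1 * cnj (w$1) - z$2 * cnj (w$2)"

definition SU11 :: "(complex^2^2) set" where
  "SU11 = {M. det M = 1 \<and> (\<forall>z w. B1 (M *v z) (M *v w) = B1 z w)}"

definition mat2 :: "complex \<Rightarrow> complex \<Rightarrow> complex \<Rightarrow> complex \<Rightarrow> complex^2^2" where
  "mat2 a b c d = (\<chi> i j. if i = 1 then (if j = 1 then a else b) else (if j = 1 then c else d))"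

text \<open>g(lambda,b): the matrix ((lambda, i b),(0, 1/lambda)) in the basis
  xi1 = (e1+e2)/sqrt 2, xi2 = (e1-e2)/sqrt 2, written in the standard basis.\<close>
definition gmat :: "real \<Rightarrow> real \<Rightarrow> complex^2^2" where
  "gmat l b = mat2 ((of_real l + of_real (1/l) + \<i> * of_real b) / 2)
                   ((of_real l - of_real (1/l) - \<i> * of_real b) / 2)
                   ((of_real l - of_real (1/l) + \<i> * of_real b) / 2)
                   ((of_real l + of_real (1/l) - \<i> * of_real b) / 2)"

text \<open>A representation PU(1,1) = SU(1,1)/{+-1} -> PU(B), given by lifts rho g in U(B)
  which are multiplicative up to unit scalars and with rho(-1) scalar.\<close>
definition proj_rep :: "(complex^2^2 \<Rightarrow> (nat \<Rightarrow> complex) \<Rightarrow> (nat \<Rightarrow> complex)) \<Rightarrow> bool" where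
  "proj_rep \<rho> \<longleftrightarrow> (\<forall>g\<in>SU11. in_UB (\<rho> g))
     \<and> (\<forall>g\<in>SU11. \<forall>h\<in>SU11. \<exists>c. cmod c = 1 \<and> (\<forall>v\<in>Hsp. \<rho> (g ** h) v = vsmul c (\<rho> g (\<rho> h v))))
     \<and> (\<exists>c. \<forall>v\<in>Hsp. \<rho> (- mat 1) v = vsmul c v)"

text \<open>cosh of the hyperbolic distance between the points [v],[w].\<close>
definition hcosh :: "(nat \<Rightarrow> complex) \<Rightarrow> (nat \<Rightarrow> complex) \<Rightarrow> real" where
  "hcosh v w = cmod (Bf v w) / sqrt (Re (Bf v v) * Re (Bf w w))"

definition orbitally_continuous :: "(complex^2^2 \<Rightarrow> (nat \<Rightarrow> complex) \<Rightarrow> (nat \<Rightarrow> complex)) \<Rightarrow> bool" where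
  "orbitally_continuous \<rho> \<longleftrightarrow> (\<forall>v\<in>Hsp. Re (Bf v v) > 0 \<longrightarrow>
     (\<forall>g0\<in>SU11. ((\<lambda>g. hcosh (\<rho> g v) (\<rho> g0 v)) \<longlongrightarrow> 1) (at g0 within SU11)))"

definition fixes_pt :: "((nat \<Rightarrow> complex) \<Rightarrow> (nat \<Rightarrow> complex)) \<Rightarrow> (nat \<Rightarrow> complex) \<Rightarrow> bool" where
  "fixes_pt T v \<longleftrightarrow> (\<exists>\<mu>. T v = vsmul \<mu> v)"

definition non_elementary :: "(complex^2^2 \<Rightarrow> (nat \<Rightarrow> complex) \<Rightarrow> (nat \<Rightarrow> complex)) \<Rightarrow> bool" where
  "non_elementary \<rho> \<longleftrightarrow>
     \<not> (\<exists>v\<in>Hsp. v \<noteq> (\<lambda>n. 0) \<and> Re (Bf v v) \<ge> 0 \<and> (\<forall>g\<in>SU11. fixes_pt (\<rho> g) v))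
   \<and> \<not> (\<exists>v\<in>Hsp. \<exists>w\<in>Hsp. v \<noteq> (\<lambda>n. 0) \<and> w \<noteq> (\<lambda>n. 0) \<and> Bf v v = 0 \<and> Bf w w = 0
         \<and> \<not> (\<exists>\<mu>. w = vsmul \<mu> v)
         \<and> (\<forall>g\<in>SU11. (fixes_pt (\<rho> g) v \<and> fixes_pt (\<rho> g) w)
                     \<or> ((\<exists>\<mu>. \<rho> g v = vsmul \<mu> w) \<and> (\<exists>\<mu>. \<rho> g w = vsmul \<mu> v))))"

text \<open>Arg(rho) = theta: for isotropic representatives eta1 (common fixed boundary point of
  all rho(g(lambda,b))), eta2 (the other common fixed boundary point of the hyperbolic
  rho(g(lambda,0)), lambda /= 1, i.e. the other endpoint of their common axis) with
  B(eta1,eta2) = 1, the lift T = c rho(g(1,1)) with T eta1 = eta1 satisfies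
  T eta2 = K eta1 + eta2 + e with e in E, and theta is the argument of K.
  (The paper shows these objects exist and that arg K is independent of choices.)\<close>
definition Arg_is :: "(complex^2^2 \<Rightarrow> (nat \<Rightarrow> complex) \<Rightarrow> (nat \<Rightarrow> complex)) \<Rightarrow> real \<Rightarrow> bool" where
  "Arg_is \<rho> \<theta> \<longleftrightarrow> (\<exists>\<eta>1\<in>Hsp. \<exists>\<eta>2\<in>Hsp. \<exists>c K e.
      Bf \<eta>1 \<eta>1 = 0 \<and> Bf \<eta>2 \<eta>2 = 0 \<and> Bf \<eta>1 \<eta>2 = 1
    \<and> (\<forall>l b. l > 0 \<longrightarrow> fixes_pt (\<rho> (gmat l b)) \<eta>1)
    \<and> (\<forall>l. l > 0 \<and> l \<noteq> 1 \<longrightarrow> fixes_pt (\<rho> (gmat l 0)) \<eta>2)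
    \<and> cmod c = 1 \<and> vsmul c (\<rho> (gmat 1 1) \<eta>1) = \<eta>1
    \<and> e \<in> Hsp \<and> Bf e \<eta>1 = 0 \<and> Bf e \<eta>2 = 0
    \<and> vsmul c (\<rho> (gmat 1 1) \<eta>2) = vadd (vadd (vsmul K \<eta>1) \<eta>2) e
    \<and> Arg K = \<theta>)"

text \<open>W is (the underlying closed complex subspace of) a complex hyperbolic subspace
  isometric to H^1_C: a subspace of signature (1,1).\<close>
definition cx_hyp_line :: "(nat \<Rightarrow> complex) set \<Rightarrow> bool" where
  "cx_hyp_line W \<longleftrightarrow> (\<exists>v\<in>Hsp. \<exists>w\<in>Hsp. Bf v v = 1 \<and> Bf w w = -1 \<and> Bf v w = 0
      \<and> W = {vadd (vsmul a v) (vsmul b w) | a b. True})"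

end

theory Submission
  imports Defs
begin


lemma Hsp_zero[simp]: "(\<lambda>n. 0) \<in> Hsp"
  by (simp add: Hsp_def)

lemma Hsp_vsmul[simp]: "f \<in> Hsp \<Longrightarrow> vsmul c f \<in> Hsp"
proof -
  assume "f \<in> Hsp"
  then have "summable (\<lambda>n. (cmod c)\<^sup>2 * (cmod (f n))\<^sup>2)"
    by (simp add: Hsp_def summable_mult)
  then show ?thesis
    by (simp add: Hsp_def vsmul_def norm_mult power_mult_distrib)
qed

lemma sq_add_le: "(cmod (a + b))\<^sup>2 \<le> 2 * (cmod a)\<^sup>2 + 2 * (cmod b)\<^sup>2"
proof -
  have "cmod (a+b) \<le> cmod a + cmod b" by (rule norm_triangle_ineq)
  then have "(cmod (a + b))\<^sup>2 \<le> (cmod a + cmod b)\<^sup>2"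
    by (simp add: power_mono)
  also have "\<dots> \<le> 2 * (cmod a)\<^sup>2 + 2 * (cmod b)\<^sup>2"
  proof -
    have "0 \<le> (cmod a - cmod b)\<^sup>2" by simp
    moreover have "(cmod a + cmod b)\<^sup>2 = 2 * (cmod a)\<^sup>2 + 2 * (cmod b)\<^sup>2 - (cmod a - cmod b)\<^sup>2"
      by (simp add: power2_eq_square algebra_simps)
    ultimately show ?thesis by linarith
  qed
  finally show ?thesis .
qed

lemma Hsp_vadd[simp]: "f \<in> Hsp \<Longrightarrow> g \<in> Hsp \<Longrightarrow> vadd f g \<in> Hsp"
proof -
  assume f: "f \<in> Hsp" and g: "g \<in> Hsp"
  have "summable (\<lambda>n. 2 * (cmod (f n))\<^sup>2 + 2 * (cmod (g n))\<^sup>2)"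
    using f g by (simp add: Hsp_def summable_add summable_mult)
  then have "summable (\<lambda>n. (cmod (f n + g n))\<^sup>2)"
    by (rule summable_comparison_test'[where N=0]) (simp add: sq_add_le)
  then show ?thesis by (simp add: Hsp_def vadd_def)
qed

lemma prod_le: "cmod (a * cnj b) \<le> (cmod a)\<^sup>2 + (cmod b)\<^sup>2"
proof -
  have "cmod (a * cnj b) = cmod a * cmod b" by (simp add: norm_mult)
  also have "\<dots> \<le> (cmod a)\<^sup>2 + (cmod b)\<^sup>2"
  proof -
    have "0 \<le> (cmod a - cmod b)\<^sup>2" by simp
    moreover have "(cmod a - cmod b)\<^sup>2 = (cmod a)\<^sup>2 + (cmod b)\<^sup>2 - 2 * (cmod a * cmod b)"
      by (simp add: power2_eq_square algebra_simps)
    moreover have "0 \<le> cmod a * cmod b" by simp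
    ultimately show ?thesis by linarith
  qed
  finally show ?thesis .
qed

lemma summable_prod: "f \<in> Hsp \<Longrightarrow> g \<in> Hsp \<Longrightarrow> summable (\<lambda>n. f n * cnj (g n))"
proof -
  assume f: "f \<in> Hsp" and g: "g \<in> Hsp"
  have "summable (\<lambda>n. (cmod (f n))\<^sup>2 + (cmod (g n))\<^sup>2)"
    using f g by (simp add: Hsp_def summable_add)
  then show ?thesis
    by (rule summable_comparison_test'[where N=0]) (simp add: prod_le)
qed

lemma summable_prodS: "f \<in> Hsp \<Longrightarrow> g \<in> Hsp \<Longrightarrow> summable (\<lambda>n. f (Suc n) * cnj (g (Suc n)))"
  using summable_prod summable_Suc_iff[of "\<lambda>n. f n * cnj (g n)"] by blast

lemma Bf_vadd1[simp]: "x \<in> Hsp \<Longrightarrow> y \<in> Hsp \<Longrightarrow> z \<in> Hsp \<Longrightarrow> Bf (vadd x y) z = Bf x z + Bf y z"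
proof -
  assume x: "x \<in> Hsp" and y: "y \<in> Hsp" and z: "z \<in> Hsp"
  have "(\<Sum>n. vadd x y (Suc n) * cnj (z (Suc n))) = (\<Sum>n. x (Suc n) * cnj (z (Suc n)) + y (Suc n) * cnj (z (Suc n)))"
    by (simp add: vadd_def distrib_right)
  also have "\<dots> = (\<Sum>n. x (Suc n) * cnj (z (Suc n))) + (\<Sum>n. y (Suc n) * cnj (z (Suc n)))"
    using suminf_add[OF summable_prodS[OF x z] summable_prodS[OF y z]] by simp
  finally show ?thesis unfolding Bf_def by (simp add: vadd_def distrib_right)
qed

lemma Bf_vsmul1[simp]: "x \<in> Hsp \<Longrightarrow> z \<in> Hsp \<Longrightarrow> Bf (vsmul a x) z = a * Bf x z"
proof -
  assume x: "x \<in> Hsp" and z: "z \<in> Hsp"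
  have "(\<Sum>n. vsmul a x (Suc n) * cnj (z (Suc n))) = (\<Sum>n. a * (x (Suc n) * cnj (z (Suc n))))"
    by (simp add: vsmul_def mult.assoc)
  also have "\<dots> = a * (\<Sum>n. x (Suc n) * cnj (z (Suc n)))"
    using suminf_mult[OF summable_prodS[OF x z]] by simp
  finally show ?thesis unfolding Bf_def by (simp add: vsmul_def right_diff_distrib mult.assoc)
qed

lemma Bf_cnj: "x \<in> Hsp \<Longrightarrow> z \<in> Hsp \<Longrightarrow> Bf z x = cnj (Bf x z)"
proof -
  assume x: "x \<in> Hsp" and z: "z \<in> Hsp"
  have "(\<lambda>n. x (Suc n) * cnj (z (Suc n))) sums (\<Sum>n. x (Suc n) * cnj (z (Suc n)))"
    using summable_prodS[OF x z] by (rule summable_sums)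
  then have "(\<lambda>n. cnj (x (Suc n) * cnj (z (Suc n)))) sums cnj (\<Sum>n. x (Suc n) * cnj (z (Suc n)))"
    by (simp only: sums_cnj)
  moreover have "(\<lambda>n. cnj (x (Suc n) * cnj (z (Suc n)))) = (\<lambda>n. z (Suc n) * cnj (x (Suc n)))"
    by (rule ext) (simp only: complex_cnj_mult complex_cnj_cnj mult.commute)
  ultimately have "(\<lambda>n. z (Suc n) * cnj (x (Suc n))) sums cnj (\<Sum>n. x (Suc n) * cnj (z (Suc n)))"
    by simp
  then have 1: "(\<Sum>n. z (Suc n) * cnj (x (Suc n))) = cnj (\<Sum>n. x (Suc n) * cnj (z (Suc n)))"
    by (rule sums_unique[symmetric])
  have 2: "z 0 * cnj (x 0) = cnj (x 0 * cnj (z 0))"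
    by (simp only: complex_cnj_mult complex_cnj_cnj mult.commute)
  show ?thesis unfolding Bf_def complex_cnj_diff 1 2 ..
qed

lemma Bf_vadd2[simp]: "x \<in> Hsp \<Longrightarrow> y \<in> Hsp \<Longrightarrow> z \<in> Hsp \<Longrightarrow> Bf z (vadd x y) = Bf z x + Bf z y"
  by (subst (1 2 3) Bf_cnj) auto

lemma Bf_vsmul2[simp]: "x \<in> Hsp \<Longrightarrow> z \<in> Hsp \<Longrightarrow> Bf z (vsmul a x) = cnj a * Bf z x"
  by (subst (1 2) Bf_cnj) auto

lemma Bf_zero1[simp]: "Bf (\<lambda>n. 0) z = 0" by (simp add: Bf_def)
lemma Bf_zero2[simp]: "Bf z (\<lambda>n. 0) = 0" by (simp add: Bf_def)

lemma mult_cnj_cmod: "z * cnj z = complex_of_real ((cmod z)\<^sup>2)"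
  by (simp add: complex_mult_cnj cmod_power2)

lemma sm_sq: "f \<in> Hsp \<Longrightarrow> summable (\<lambda>n. (cmod (f (Suc n)))\<^sup>2)"
  using summable_Suc_iff[of "\<lambda>n. (cmod (f n))\<^sup>2"] by (simp add: Hsp_def)

lemma sum_sq: assumes "f \<in> Hsp"
  shows "(\<Sum>n. f (Suc n) * cnj (f (Suc n))) = complex_of_real (\<Sum>n. (cmod (f (Suc n)))\<^sup>2)"
proof -
  have F: "(\<lambda>n. f (Suc n) * cnj (f (Suc n))) = (\<lambda>n. complex_of_real ((cmod (f (Suc n)))\<^sup>2))"
    by (rule ext, rule mult_cnj_cmod)
  show ?thesis unfolding F by (rule suminf_of_real[OF sm_sq[OF assms], symmetric])
qed

lemma negdef:
  assumes u: "u \<in> Hsp" and upos: "Re (Bf u u) > 0" and e: "e \<in> Hsp"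
    and eu: "Bf e u = 0" and ee: "Bf e e = 0"
  shows "e = (\<lambda>n. 0)"
proof -
  define v where "v = vadd (vsmul (e 0) u) (vsmul (- u 0) e)"
  have v: "v \<in> Hsp" using u e by (simp add: v_def)
  have ue: "Bf u e = 0" using Bf_cnj[OF e u] eu by simp
  have "Bf v v = e 0 * cnj (e 0) * Bf u u"
    using u e eu ue ee by (simp add: v_def algebra_simps)
  moreover have v0: "v 0 = 0" by (simp add: v_def vadd_def vsmul_def)
  ultimately have eq: "e 0 * cnj (e 0) * Bf u u = - (\<Sum>n. v (Suc n) * cnj (v (Suc n)))"
    by (simp add: Bf_def)
  have sm: "summable (\<lambda>n. (cmod (v (Suc n)))\<^sup>2)" using v by (rule sm_sq)
  have S: "(\<Sum>n. v (Suc n) * cnj (v (Suc n))) = complex_of_real (\<Sum>n. (cmod (v (Suc n)))\<^sup>2)"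
    using v by (rule sum_sq)
  have Sge: "(\<Sum>n. (cmod (v (Suc n)))\<^sup>2) \<ge> 0"
    using sm by (simp add: suminf_nonneg)
  have "Re (e 0 * cnj (e 0) * Bf u u) = (cmod (e 0))\<^sup>2 * Re (Bf u u)"
    by (simp add: mult_cnj_cmod)
  then have R: "(cmod (e 0))\<^sup>2 * Re (Bf u u) = - (\<Sum>n. (cmod (v (Suc n)))\<^sup>2)"
    using eq S by simp
  have "(cmod (e 0))\<^sup>2 * Re (Bf u u) \<ge> 0" using upos by simp
  then have z1: "(cmod (e 0))\<^sup>2 * Re (Bf u u) = 0" and z2: "(\<Sum>n. (cmod (v (Suc n)))\<^sup>2) = 0"
    using R Sge by linarith+
  from z1 upos have e0: "e 0 = 0" by simp
  from z2 have vS: "\<And>n. v (Suc n) = 0"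
    using suminf_eq_zero_iff[OF sm] by simp
  have "u 0 \<noteq> 0"
  proof
    assume "u 0 = 0"
    then have "Re (Bf u u) = - Re (\<Sum>n. u (Suc n) * cnj (u (Suc n)))" by (simp add: Bf_def)
    moreover have smu: "summable (\<lambda>n. (cmod (u (Suc n)))\<^sup>2)" using u by (rule sm_sq)
    ultimately have "Re (Bf u u) = - (\<Sum>n. (cmod (u (Suc n)))\<^sup>2)"
      using sum_sq[OF u] by simp
    moreover have "(\<Sum>n. (cmod (u (Suc n)))\<^sup>2) \<ge> 0" using smu by (simp add: suminf_nonneg)
    ultimately show False using upos by linarith
  qed
  show ?thesis
  proof
    fix n show "e n = 0"
    proof (cases n)
      case 0 then show ?thesis using e0 by simp
    next
      case (Suc m)
      have "v (Suc m) = - u 0 * e (Suc m)" using e0 by (simp add: v_def vadd_def vsmul_def)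
      then show ?thesis using vS[of m] \<open>u 0 \<noteq> 0\<close> Suc by simp
    qed
  qed
qed



lemma two_neq: "(1::2) \<noteq> 2" by simp

lemma mat2_nth[simp]: "mat2 a b c d $ 1 $ 1 = a" "mat2 a b c d $ 1 $ 2 = b"
  "mat2 a b c d $ 2 $ 1 = c" "mat2 a b c d $ 2 $ 2 = d"
  by (simp_all add: mat2_def)

lemma mat2_eta: "(M::complex^2^2) = mat2 (M$1$1) (M$1$2) (M$2$1) (M$2$2)"
  unfolding vec_eq_iff forall_2 by simp

lemma mat2_eq_iff: "mat2 a b c d = mat2 a' b' c' d' \<longleftrightarrow> a = a' \<and> b = b' \<and> c = c' \<and> d = d'"
  unfolding vec_eq_iff forall_2 by simp

lemma mat2_mult: "mat2 a b c d ** mat2 a' b' c' d' =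
   mat2 (a*a' + b*c') (a*b' + b*d') (c*a' + d*c') (c*b' + d*d')"
  unfolding vec_eq_iff forall_2 matrix_matrix_mult_def by (simp add: sum_2)

lemma mat2_mv[simp]: "(mat2 a b c d *v z) $ 1 = a * z$1 + b * z$2"
  "(mat2 a b c d *v z) $ 2 = c * z$1 + d * z$2"
  by (simp_all add: matrix_vector_mult_def sum_2)

definition gx :: "complex \<Rightarrow> complex \<Rightarrow> complex \<Rightarrow> complex \<Rightarrow> complex^2^2" where
  "gx p q r s = mat2 ((p+q+r+s)/2) ((p-q+r-s)/2) ((p+q-r-s)/2) ((p-q-r+s)/2)"

lemma gx_mult: "gx a b c d ** gx a' b' c' d' = gx (a*a' + b*c') (a*b' + b*d') (c*a' + d*c') (c*b' + d*d')"
  unfolding gx_def mat2_mult mat2_eq_iff by (simp add: field_simps)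

lemma gmat_gx: "l \<noteq> 0 \<Longrightarrow> gmat l b = gx (of_real l) (\<i> * of_real b) 0 (of_real (1/l))"
  unfolding gmat_def gx_def mat2_eq_iff by (simp add: field_simps)

definition wm :: "complex^2^2" where "wm = gx 0 \<i> \<i> 0"

lemma minus_gx: "- mat 1 = gx (-1) 0 0 (-1)"
  unfolding gx_def vec_eq_iff forall_2 by (simp add: mat_def)

lemma SU11_mat2:
  assumes "a * cnj a - b * cnj b = 1"
  shows "mat2 a b (cnj b) (cnj a) \<in> SU11"
proof -
  have "det (mat2 a b (cnj b) (cnj a)) = 1" using assms by (simp add: det_2)
  moreover have "B1 (mat2 a b (cnj b) (cnj a) *v z) (mat2 a b (cnj b) (cnj a) *v w) = B1 z w" for z w
  proof -
    have "B1 (mat2 a b (cnj b) (cnj a) *v z) (mat2 a b (cnj b) (cnj a) *v w)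
      = (a * cnj a - b * cnj b) * (z$1 * cnj (w$1)) - (a * cnj a - b * cnj b) * (z$2 * cnj (w$2))"
      by (simp add: B1_def algebra_simps)
    then show ?thesis using assms by (simp add: B1_def)
  qed
  ultimately show ?thesis by (simp add: SU11_def)
qed

lemma gx_SU11:
  fixes p q r s :: real
  assumes "p * s + q * r = 1"
  shows "gx (of_real p) (\<i> * of_real q) (\<i> * of_real r) (of_real s) \<in> SU11"
proof -
  define a where "a = (of_real p + \<i> * of_real q + \<i> * of_real r + of_real s) / (2::complex)"
  define b where "b = (of_real p - \<i> * of_real q + \<i> * of_real r - of_real s) / (2::complex)"
  have e: "gx (of_real p) (\<i> * of_real q) (\<i> * of_real r) (of_real s) = mat2 a b (cnj b) (cnj a)"
    unfolding gx_def mat2_eq_iff a_def b_def by (simp add: complex_eq_iff)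
  have "a * cnj a - b * cnj b = 1"
    unfolding a_def b_def using assms
    apply (simp add: complex_eq_iff algebra_simps power2_eq_square)
    apply algebra
    done
  then show ?thesis using e SU11_mat2 by simp
qed

lemma gmat_SU11: "l \<noteq> 0 \<Longrightarrow> gmat l b \<in> SU11"
  using gx_SU11[of l "1/l" b 0] by (simp add: gmat_gx)

lemma wm_SU11: "wm \<in> SU11"
  using gx_SU11[of 0 0 1 1] by (simp add: wm_def)

lemma minus_SU11: "- mat 1 \<in> SU11"
  using gx_SU11[of "-1" "-1" 0 0] by (simp add: minus_gx)

lemma SU11_mult: "g \<in> SU11 \<Longrightarrow> h \<in> SU11 \<Longrightarrow> g ** h \<in> SU11"
  by (simp add: SU11_def det_mul matrix_vector_mul_assoc[symmetric])

lemma SU11_form: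
  assumes "M \<in> SU11"
  shows "\<exists>p q r s::real. p * s + q * r = 1 \<and> M = gx (of_real p) (\<i> * of_real q) (\<i> * of_real r) (of_real s)"
proof -
  define a where "a = M$1$1"
  define b where "b = M$1$2"
  define c where "c = M$2$1"
  define d where "d = M$2$2"
  have M: "M = mat2 a b c d" unfolding a_def b_def c_def d_def by (rule mat2_eta)
  define e1 :: "complex^2" where "e1 = (\<chi> i. if i = 1 then 1 else 0)"
  define e2 :: "complex^2" where "e2 = (\<chi> i. if i = 1 then 0 else 1)"
  have B: "\<And>z w. B1 (M *v z) (M *v w) = B1 z w" and D: "det M = 1" using assms by (auto simp: SU11_def)
  have E1: "a * cnj a - c * cnj c = 1" using B[of e1 e1] by (simp add: M B1_def e1_def)
  have E2: "b * cnj b - d * cnj d = -1" using B[of e2 e2] by (simp add: M B1_def e2_def)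
  have E3: "b * cnj a - d * cnj c = 0" using B[of e2 e1] by (simp add: M B1_def e1_def e2_def)
  have Dt: "a * d - b * c = 1" using D by (simp add: M det_2)
  have E3': "cnj a * b = cnj c * d" using E3 by (simp add: algebra_simps)
  have "cnj a = cnj a * (a * d - b * c)" using Dt by simp
  also have "\<dots> = a * cnj a * d - (cnj a * b) * c" by (simp add: algebra_simps)
  also have "\<dots> = (a * cnj a - c * cnj c) * d" using E3' by (simp add: algebra_simps)
  finally have dA: "d = cnj a" using E1 by simp
  have cB: "c = cnj b"
  proof (cases "c = 0")
    case True
    then have "a * cnj a = 1" using E1 by simp
    moreover have "b * cnj b - d * cnj d = -1" by (rule E2)
    ultimately have "b * cnj b = 0" using dA by (simp add: mult.commute)
    then have "b = 0" using mult_cnj_cmod[of b] by simp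
    then show ?thesis using True by simp
  next
    case False
    have "b * c = c * cnj c" using Dt E1 dA by (simp add: algebra_simps)
    then have "b = cnj c" using False by (simp add: mult.commute)
    then show ?thesis by simp
  qed
  define p where "p = Re a + Re b"
  define q where "q = Im a - Im b"
  define r where "r = Im a + Im b"
  define s where "s = Re a - Re b"
  have "M = gx (of_real p) (\<i> * of_real q) (\<i> * of_real r) (of_real s)"
    unfolding M dA cB gx_def mat2_eq_iff p_def q_def r_def s_def by (simp add: complex_eq_iff)
  moreover have "p * s + q * r = 1"
  proof -
    have "Re (a * cnj a - c * cnj c) = 1" using E1 by simp
    then show ?thesis unfolding p_def q_def r_def s_def cB
      by (simp add: algebra_simps power2_eq_square)
  qed
  ultimately show ?thesis by blast
qed



lemma gx_cong: "a = a' \<Longrightarrow> b = b' \<Longrightarrow> c = c' \<Longrightarrow> d = d' \<Longrightarrow> gx a b c d = gx a' b' c' d'"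
  by simp

lemma M1: "gmat 1 1 ** gmat 1 1 = gmat 1 2"
  unfolding gmat_gx[of 1, simplified] gx_mult by (rule gx_cong) simp_all

lemma M2: "t \<noteq> 0 \<Longrightarrow> gmat t 0 ** gmat 1 1 = gmat 1 (t\<^sup>2) ** gmat t 0"
  unfolding gmat_gx[of 1, simplified] by (simp add: gmat_gx gx_mult power2_eq_square mult_ac)

lemma M3: "t \<noteq> 0 \<Longrightarrow> gmat t 0 ** wm = wm ** gmat (1/t) 0"
  unfolding wm_def by (simp add: gmat_gx gx_mult mult_ac)

lemma M4: "gmat 2 0 ** gmat (1/2) 0 = gmat 1 0"
  by (simp add: gmat_gx gx_mult)

lemma M5: "t \<noteq> 0 \<Longrightarrow> (gmat t 0 ** gmat 1 1) ** gmat (1/t) 0 = gmat 1 (t\<^sup>2)"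
  unfolding gmat_gx[of 1, simplified] by (simp add: gmat_gx gx_mult power2_eq_square mult_ac)

lemma M6: "gmat 1 (-b) ** gmat 1 b = gmat 1 0"
  by (simp add: gmat_gx gx_mult)

lemma M7: "l \<noteq> 0 \<Longrightarrow> gmat l 0 ** gmat 1 (b/l) = gmat l b"
  by (simp add: gmat_gx gx_mult)

lemma M8:
  fixes p q r s :: real
  assumes "r \<noteq> 0" "p * s + q * r = 1"
  shows "gx (of_real p) (\<i> * of_real q) (\<i> * of_real r) (of_real s) = (gmat 1 (-p/r) ** wm) ** gmat r (-s)"
proof -
  have q: "q = (1 - p * s) / r" using assms by (simp add: field_simps)
  show ?thesis
    unfolding wm_def using assms(1)
    apply (simp add: gmat_gx gx_mult)
    apply (rule gx_cong)
    apply (simp_all add: q field_simps)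
    done
qed

lemma M9:
  fixes p q s :: real
  assumes "p * s = 1"
  shows "gx (of_real p) (\<i> * of_real q) 0 (of_real s) = gmat p q"
proof -
  have p0: "p \<noteq> 0" using assms by auto
  have "s = 1/p" using assms p0 by (simp add: field_simps mult.commute)
  note p0 this
  then show ?thesis by (simp add: gmat_gx)
qed

lemma M10: "- mat 1 ** gx p q r s = gx (-p) (-q) (-r) (-s)"
  unfolding minus_gx gx_mult by simp



definition lin :: "((nat \<Rightarrow> complex) \<Rightarrow> (nat \<Rightarrow> complex)) \<Rightarrow> bool" where
  "lin T \<longleftrightarrow> (\<forall>v\<in>Hsp. \<forall>w\<in>Hsp. \<forall>a b. T (vadd (vsmul a v) (vsmul b w)) = vadd (vsmul a (T v)) (vsmul b (T w)))"

lemma vadd_smul0: "vadd (vsmul a v) (vsmul 0 v) = vsmul a v"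
  by (simp add: vadd_def vsmul_def)

lemma vsmul1: "vsmul 1 v = v"
  by (simp add: vsmul_def)

lemma lin_smul: "lin T \<Longrightarrow> v \<in> Hsp \<Longrightarrow> T (vsmul a v) = vsmul a (T v)"
  unfolding lin_def by (metis vadd_smul0)

lemma lin_add: "lin T \<Longrightarrow> v \<in> Hsp \<Longrightarrow> w \<in> Hsp \<Longrightarrow> T (vadd v w) = vadd (T v) (T w)"
  unfolding lin_def by (metis vsmul1)

lemma lin_zero: "lin T \<Longrightarrow> v \<in> Hsp \<Longrightarrow> T (\<lambda>n. 0) = (\<lambda>n. 0)"
proof -
  assume "lin T" "v \<in> Hsp"
  then have "T (vsmul 0 v) = vsmul 0 (T v)" by (rule lin_smul)
  moreover have "vsmul 0 v = (\<lambda>n. 0)" "vsmul 0 (T v) = (\<lambda>n. 0)" by (auto simp: vsmul_def)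
  ultimately show ?thesis by simp
qed

lemma UB_lin: "in_UB T \<Longrightarrow> lin T" by (simp add: in_UB_def lin_def)
lemma UB_B: "in_UB T \<Longrightarrow> v \<in> Hsp \<Longrightarrow> w \<in> Hsp \<Longrightarrow> Bf (T v) (T w) = Bf v w" by (simp add: in_UB_def)
lemma UB_Hsp: "in_UB T \<Longrightarrow> v \<in> Hsp \<Longrightarrow> T v \<in> Hsp" by (auto simp: in_UB_def bij_betw_def)
lemma UB_inj: "in_UB T \<Longrightarrow> inj_on T Hsp" by (auto simp: in_UB_def bij_betw_def)

definition Wsp :: "(nat \<Rightarrow> complex) \<Rightarrow> (nat \<Rightarrow> complex) \<Rightarrow> (nat \<Rightarrow> complex) set" where
  "Wsp e1 e2 = {vadd (vsmul a e1) (vsmul b e2) | a b. True}"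

lemma in_Wsp: "vadd (vsmul a e1) (vsmul b e2) \<in> Wsp e1 e2"
  unfolding Wsp_def by blast

lemma Wsp_Hsp: "e1 \<in> Hsp \<Longrightarrow> e2 \<in> Hsp \<Longrightarrow> x \<in> Wsp e1 e2 \<Longrightarrow> x \<in> Hsp"
  unfolding Wsp_def by auto

lemma Wsp_smul: "x \<in> Wsp e1 e2 \<Longrightarrow> vsmul c x \<in> Wsp e1 e2"
proof -
  assume "x \<in> Wsp e1 e2"
  then obtain a b where x: "x = vadd (vsmul a e1) (vsmul b e2)" unfolding Wsp_def by blast
  have "vsmul c x = vadd (vsmul (c*a) e1) (vsmul (c*b) e2)"
    unfolding x by (simp add: vadd_def vsmul_def algebra_simps)
  then show ?thesis by (simp add: in_Wsp)
qed

locale iso_pair =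
  fixes e1 e2 :: "nat \<Rightarrow> complex"
  assumes e1: "e1 \<in> Hsp" and e2: "e2 \<in> Hsp"
    and B11: "Bf e1 e1 = 0" and B22: "Bf e2 e2 = 0" and B12: "Bf e1 e2 = 1"
begin

lemma B21: "Bf e2 e1 = 1" using Bf_cnj[OF e1 e2] B12 by simp

lemma coef1: "Bf (vadd (vsmul a e1) (vsmul b e2)) e2 = a"
  using e1 e2 B12 B22 by simp

lemma coef2: "Bf (vadd (vsmul a e1) (vsmul b e2)) e1 = b"
  using e1 e2 B11 B21 by simp

lemma comb_eq: "vadd (vsmul a e1) (vsmul b e2) = vadd (vsmul a' e1) (vsmul b' e2) \<Longrightarrow> a = a' \<and> b = b'"
  by (metis coef1 coef2)

lemma comb_zero: "vadd (vsmul a e1) (vsmul b e2) = (\<lambda>n. 0) \<Longrightarrow> a = 0 \<and> b = 0"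
proof -
  assume "vadd (vsmul a e1) (vsmul b e2) = (\<lambda>n. 0)"
  moreover have "(\<lambda>n. 0) = vadd (vsmul 0 e1) (vsmul 0 e2)" by (simp add: vadd_def vsmul_def)
  ultimately show ?thesis using comb_eq by metis
qed

lemma lin_comb: "lin T \<Longrightarrow> T e1 = vadd (vsmul x1 e1) (vsmul y1 e2) \<Longrightarrow> T e2 = vadd (vsmul x2 e1) (vsmul y2 e2) \<Longrightarrow>
   T (vadd (vsmul a e1) (vsmul b e2)) = vadd (vsmul (a*x1 + b*x2) e1) (vsmul (a*y1 + b*y2) e2)"
  unfolding lin_def using e1 e2 by (simp add: vadd_def vsmul_def algebra_simps)

lemma onto:
  assumes L: "lin T" and I: "inj_on T Hsp"
    and T1: "T e1 \<in> Wsp e1 e2" and T2: "T e2 \<in> Wsp e1 e2"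
  shows "T ` Wsp e1 e2 = Wsp e1 e2"
proof -
  obtain x1 y1 where t1: "T e1 = vadd (vsmul x1 e1) (vsmul y1 e2)" using T1 unfolding Wsp_def by blast
  obtain x2 y2 where t2: "T e2 = vadd (vsmul x2 e1) (vsmul y2 e2)" using T2 unfolding Wsp_def by blast
  note LC = lin_comb[OF L t1 t2]
  have hom: "\<alpha> = 0 \<and> \<beta> = 0" if h1: "\<alpha>*x1 + \<beta>*x2 = 0" and h2: "\<alpha>*y1 + \<beta>*y2 = 0" for \<alpha> \<beta>
  proof -
    have "T (vadd (vsmul \<alpha> e1) (vsmul \<beta> e2)) = vadd (vsmul 0 e1) (vsmul 0 e2)"
      using LC h1 h2 by simp
    also have "\<dots> = (\<lambda>n. 0)" by (simp add: vadd_def vsmul_def)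
    also have "\<dots> = T (\<lambda>n. 0)" using lin_zero[OF L e1] by simp
    finally have "vadd (vsmul \<alpha> e1) (vsmul \<beta> e2) = (\<lambda>n. 0)"
      using I e1 e2 unfolding inj_on_def by simp
    then show ?thesis by (rule comb_zero)
  qed
  have det: "x1*y2 - x2*y1 \<noteq> 0"
  proof
    assume d: "x1*y2 - x2*y1 = 0"
    have "y2 = 0 \<and> -y1 = 0" using hom[of y2 "-y1"] d by (simp add: algebra_simps)
    moreover have "x2 = 0 \<and> -x1 = 0" using hom[of x2 "-x1"] d by (simp add: algebra_simps)
    ultimately show False using hom[of 1 0] by simp
  qed
  show ?thesis
  proof
    show "T ` Wsp e1 e2 \<subseteq> Wsp e1 e2"
      using LC unfolding Wsp_def by auto
    show "Wsp e1 e2 \<subseteq> T ` Wsp e1 e2"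
    proof
      fix z assume "z \<in> Wsp e1 e2"
      then obtain a b where z: "z = vadd (vsmul a e1) (vsmul b e2)" unfolding Wsp_def by blast
      obtain d where dd: "d = x1*y2 - x2*y1" by blast
      have dnz: "d \<noteq> 0" using det dd by simp
      define \<alpha> where "\<alpha> = (a*y2 - b*x2) / d"
      define \<beta> where "\<beta> = (b*x1 - a*y1) / d"
      have n1: "(a*y2 - b*x2)*x1 + (b*x1 - a*y1)*x2 = a*d" unfolding dd by (simp add: algebra_simps)
      have n2: "(a*y2 - b*x2)*y1 + (b*x1 - a*y1)*y2 = b*d" unfolding dd by (simp add: algebra_simps)
      have "\<alpha>*x1 + \<beta>*x2 = ((a*y2 - b*x2)*x1 + (b*x1 - a*y1)*x2) / d"
        unfolding \<alpha>_def \<beta>_def by (simp add: add_divide_distrib)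
      also have "\<dots> = a" using n1 dnz by simp
      finally have c1: "\<alpha>*x1 + \<beta>*x2 = a" .
      have "\<alpha>*y1 + \<beta>*y2 = ((a*y2 - b*x2)*y1 + (b*x1 - a*y1)*y2) / d"
        unfolding \<alpha>_def \<beta>_def by (simp add: add_divide_distrib)
      also have "\<dots> = b" using n2 dnz by simp
      finally have c2: "\<alpha>*y1 + \<beta>*y2 = b" .
      note c1 c2
      then have "T (vadd (vsmul \<alpha> e1) (vsmul \<beta> e2)) = z" using LC z by simp
      then show "z \<in> T ` Wsp e1 e2" using in_Wsp by blast
    qed
  qed
qed

lemma negdef_e:
  assumes e: "e \<in> Hsp" and "Bf e e1 = 0" "Bf e e2 = 0" "Bf e e = 0"
  shows "e = (\<lambda>n. 0)"
proof (rule negdef[OF _ _ e])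
  show "vadd e1 e2 \<in> Hsp" using e1 e2 by simp
  show "0 < Re (Bf (vadd e1 e2) (vadd e1 e2))" using e1 e2 B11 B22 B12 B21 by simp
  show "Bf e (vadd e1 e2) = 0" using assms e1 e2 by simp
  show "Bf e e = 0" by fact
qed

lemma decomp:
  assumes v: "v \<in> Hsp"
  shows "\<exists>e\<in>Hsp. Bf e e1 = 0 \<and> Bf e e2 = 0 \<and> v = vadd (vadd (vsmul (Bf v e2) e1) (vsmul (Bf v e1) e2)) e"
proof -
  define e where "e = vadd v (vadd (vsmul (- Bf v e2) e1) (vsmul (- Bf v e1) e2))"
  have eH: "e \<in> Hsp" using v e1 e2 by (simp add: e_def)
  have "Bf e e1 = 0" "Bf e e2 = 0" using v e1 e2 B11 B12 B21 B22 by (simp_all add: e_def)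
  moreover have "v = vadd (vadd (vsmul (Bf v e2) e1) (vsmul (Bf v e1) e2)) e"
    by (simp add: e_def vadd_def vsmul_def)
  ultimately show ?thesis using eH by blast
qed

lemma eigen_in_W:
  assumes UB: "in_UB A"
    and A1: "A e1 = vsmul \<mu>1 e1" and A2: "A e2 = vsmul \<mu>2 e2"
    and m1: "cmod \<mu>1 \<noteq> 1" and m2: "cmod \<mu>2 \<noteq> 1"
    and v: "v \<in> Hsp" and Av: "A v = vsmul \<nu> v" and vv: "Bf v v = 0"
  shows "v \<in> Wsp e1 e2"
proof -
  obtain e where eH: "e \<in> Hsp" and e1o: "Bf e e1 = 0" and e2o: "Bf e e2 = 0"
    and vd: "v = vadd (vadd (vsmul (Bf v e2) e1) (vsmul (Bf v e1) e2)) e"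
    using decomp[OF v] by blast
  define a where "a = Bf v e2"
  define b where "b = Bf v e1"
  have vd': "v = vadd (vadd (vsmul a e1) (vsmul b e2)) e" using vd by (simp add: a_def b_def)
  have L: "lin A" using UB by (rule UB_lin)
  have AeH: "A e \<in> Hsp" using UB eH by (rule UB_Hsp)
  have "\<mu>1 * cnj \<mu>2 = Bf (A e1) (A e2)" using A1 A2 e1 e2 B12 by simp
  also have "\<dots> = 1" using UB_B[OF UB e1 e2] B12 by simp
  finally have mu: "\<mu>1 * cnj \<mu>2 = 1" .
  then have mu1: "\<mu>1 \<noteq> 0" and mu2: "\<mu>2 \<noteq> 0" by auto
  have "cnj \<mu>1 * Bf (A e) e1 = Bf (A e) (A e1)" using A1 e1 AeH by simp
  also have "\<dots> = 0" using UB_B[OF UB eH e1] e1o by simp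
  finally have Ae1: "Bf (A e) e1 = 0" using mu1 by simp
  have "cnj \<mu>2 * Bf (A e) e2 = Bf (A e) (A e2)" using A2 e2 AeH by simp
  also have "\<dots> = 0" using UB_B[OF UB eH e2] e2o by simp
  finally have Ae2: "Bf (A e) e2 = 0" using mu2 by simp
  have Avd: "A v = vadd (vadd (vsmul (a*\<mu>1) e1) (vsmul (b*\<mu>2) e2)) (A e)"
  proof -
    have "A v = vadd (vadd (vsmul a (A e1)) (vsmul b (A e2))) (A e)"
      by (subst vd') (simp add: lin_add[OF L] lin_smul[OF L] e1 e2 eH)
    then show ?thesis by (simp add: A1 A2 vsmul_def vadd_def mult.assoc)
  qed
  have "\<nu> * a = Bf (A v) e2" using Av v e2 by (simp add: a_def)
  also have "\<dots> = a * \<mu>1" unfolding Avd using e1 e2 AeH Ae2 B12 B22 by simp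
  finally have na: "\<nu> * a = a * \<mu>1" .
  have "\<nu> * b = Bf (A v) e1" using Av v e1 by (simp add: b_def)
  also have "\<dots> = b * \<mu>2" unfolding Avd using e1 e2 AeH Ae1 B11 B21 by simp
  finally have nb: "\<nu> * b = b * \<mu>2" .
  have Ae: "A e = vsmul \<nu> e"
  proof
    fix n
    have h1: "A v n = a*\<mu>1 * e1 n + b*\<mu>2 * e2 n + A e n"
      by (subst Avd) (simp add: vadd_def vsmul_def)
    have h2: "v n = a * e1 n + b * e2 n + e n"
      by (subst vd') (simp add: vadd_def vsmul_def)
    have h3: "A v n = \<nu> * v n" using Av by (simp add: vsmul_def)
    have h4: "a*\<mu>1 = \<nu> * a" "b*\<mu>2 = \<nu> * b" using na nb by (metis mult.commute)+
    have "A e n = A v n - a*\<mu>1 * e1 n - b*\<mu>2 * e2 n" using h1 by simp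
    also have "\<dots> = \<nu> * (a * e1 n + b * e2 n + e n) - \<nu> * a * e1 n - \<nu> * b * e2 n"
      unfolding h3 h2 h4 ..
    also have "\<dots> = \<nu> * e n" by (simp add: algebra_simps)
    finally show "A e n = vsmul \<nu> e n" by (simp add: vsmul_def)
  qed
  have ee: "Bf e e = 0"
  proof (cases "cmod \<nu> = 1")
    case True
    have "a = 0"
    proof (rule ccontr)
      assume an: "a \<noteq> 0"
      have "\<nu> * a = \<mu>1 * a" using na by (simp add: mult.commute)
      then have "\<nu> = \<mu>1" using an by simp
      then show False using True m1 by simp
    qed
    moreover have "b = 0"
    proof (rule ccontr)
      assume bn: "b \<noteq> 0"
      have "\<nu> * b = \<mu>2 * b" using nb by (simp add: mult.commute)
      then have "\<nu> = \<mu>2" using bn by simp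
      then show False using True m2 by simp
    qed
    ultimately have "v = e" using vd' by (simp add: vadd_def vsmul_def)
    then show ?thesis using vv by simp
  next
    case False
    have "Bf e e = Bf (A e) (A e)" using UB_B[OF UB eH eH] by simp
    also have "\<dots> = \<nu> * cnj \<nu> * Bf e e" using Ae eH by simp
    finally have "(1 - \<nu> * cnj \<nu>) * Bf e e = 0" by (simp add: algebra_simps)
    moreover have "\<nu> * cnj \<nu> \<noteq> 1"
    proof
      assume "\<nu> * cnj \<nu> = 1"
      then have "complex_of_real ((cmod \<nu>)\<^sup>2) = 1" by (metis mult_cnj_cmod)
      then have "(cmod \<nu>)\<^sup>2 = 1" by (simp only: of_real_eq_1_iff)
      then show False using False norm_ge_zero[of \<nu>] by (simp add: power2_eq_1_iff)
    qed
    ultimately show ?thesis by simp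
  qed
  have "e = (\<lambda>n. 0)" using negdef_e[OF eH e1o e2o ee] .
  then have "v = vadd (vsmul a e1) (vsmul b e2)" using vd' by (simp add: vadd_def vsmul_def)
  then show ?thesis by (simp add: in_Wsp)
qed

end



lemma smul_comb: "vsmul k (vadd (vsmul a e1) (vsmul b e2)) = vadd (vsmul (k*a) e1) (vsmul (k*b) e2)"
  by (simp add: vadd_def vsmul_def algebra_simps)

lemma smul_smul: "vsmul k (vsmul a x) = vsmul (k*a) x"
  by (simp add: vsmul_def mult.assoc)

lemma smul_inv: "c \<noteq> 0 \<Longrightarrow> vsmul c x = y \<Longrightarrow> x = vsmul (1/c) y"
  by (auto simp: vsmul_def)

lemma cmod1_cnj: "cmod c = 1 \<Longrightarrow> c * cnj c = 1"
  using mult_cnj_cmod[of c] by simp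

locale rep_ctx = iso_pair e1 e2 for e1 e2 +
  fixes \<rho> :: "complex^2^2 \<Rightarrow> (nat \<Rightarrow> complex) \<Rightarrow> (nat \<Rightarrow> complex)"
  assumes UBg: "\<And>g. g \<in> SU11 \<Longrightarrow> in_UB (\<rho> g)"
    and MUL: "\<And>g h. g \<in> SU11 \<Longrightarrow> h \<in> SU11 \<Longrightarrow> \<exists>c. cmod c = 1 \<and> (\<forall>v\<in>Hsp. \<rho> (g ** h) v = vsmul c (\<rho> g (\<rho> h v)))"
begin

abbreviation "W \<equiv> Wsp e1 e2"

definition S where "S = {g \<in> SU11. \<rho> g ` W = W}"

lemma e1W: "e1 \<in> W" using in_Wsp[of 1 e1 0 e2] by (simp add: vadd_def vsmul_def)
lemma e2W: "e2 \<in> W" using in_Wsp[of 0 e1 1 e2] by (simp add: vadd_def vsmul_def)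
lemma WH: "x \<in> W \<Longrightarrow> x \<in> Hsp" using Wsp_Hsp[OF e1 e2] .

lemma S_intro: assumes g: "g \<in> SU11" and h1: "\<rho> g e1 \<in> W" and h2: "\<rho> g e2 \<in> W" shows "g \<in> S"
proof -
  have "\<rho> g ` W = W" by (rule onto[OF UB_lin[OF UBg[OF g]] UB_inj[OF UBg[OF g]] h1 h2])
  then show ?thesis by (simp add: S_def g)
qed

lemma S_mapsW: "g \<in> S \<Longrightarrow> x \<in> W \<Longrightarrow> \<rho> g x \<in> W"
  unfolding S_def by blast

lemma S_mult: assumes g: "g \<in> S" and h: "h \<in> S" shows "g ** h \<in> S"
proof -
  have gS: "g \<in> SU11" and hS: "h \<in> SU11" using g h by (auto simp: S_def)
  obtain k where k: "\<forall>v\<in>Hsp. \<rho> (g ** h) v = vsmul k (\<rho> g (\<rho> h v))" using MUL[OF gS hS] by blast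
  have X: "\<rho> (g ** h) x \<in> W" if "x \<in> W" for x
  proof -
    have "vsmul k (\<rho> g (\<rho> h x)) \<in> W" using S_mapsW[OF g S_mapsW[OF h that]] by (rule Wsp_smul)
    then show ?thesis using k WH[OF that] by simp
  qed
  show ?thesis by (rule S_intro[OF SU11_mult[OF gS hS] X[OF e1W] X[OF e2W]])
qed

lemma S_inv: assumes g: "g \<in> S" and hS: "h \<in> SU11" and gh: "g ** h \<in> S" shows "h \<in> S"
proof -
  have gS: "g \<in> SU11" using g by (auto simp: S_def)
  obtain k where k1: "cmod k = 1" and k: "\<forall>v\<in>Hsp. \<rho> (g ** h) v = vsmul k (\<rho> g (\<rho> h v))"
    using MUL[OF gS hS] by blast
  have k0: "k \<noteq> 0" using k1 by auto
  have "\<rho> h x \<in> W" if x: "x \<in> W" for x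
  proof -
    have "\<rho> (g ** h) x \<in> W" using S_mapsW[OF gh x] .
    then have "vsmul k (\<rho> g (\<rho> h x)) \<in> W" using k WH[OF x] by simp
    then have "vsmul (1/k) (vsmul k (\<rho> g (\<rho> h x))) \<in> W" by (rule Wsp_smul)
    then have "\<rho> g (\<rho> h x) \<in> W" using k0 by (simp add: smul_smul vsmul1)
    then have "\<rho> g (\<rho> h x) \<in> \<rho> g ` W" using g by (simp add: S_def)
    then obtain y where y1: "\<rho> g (\<rho> h x) = \<rho> g y" and y2: "y \<in> W" by (rule imageE)
    have "\<rho> h x \<in> Hsp" using UB_Hsp[OF UBg[OF hS] WH[OF x]] .
    then have "\<rho> h x = y" by (rule inj_onD[OF UB_inj[OF UBg[OF gS]] y1 _ WH[OF y2]])
    then show ?thesis using y2 by simp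
  qed
  then show ?thesis using S_intro[OF hS] e1W e2W by simp
qed

end



locale arg_ctx = rep_ctx e1 e2 \<rho> for e1 e2 \<rho> +
  fixes c K c0 :: complex and e :: "nat \<Rightarrow> complex"
  assumes fix1: "\<And>l b. l > 0 \<Longrightarrow> fixes_pt (\<rho> (gmat l b)) e1"
    and fix2: "\<And>l. l > 0 \<Longrightarrow> l \<noteq> 1 \<Longrightarrow> fixes_pt (\<rho> (gmat l 0)) e2"
    and c1: "cmod c = 1" and cN1: "vsmul c (\<rho> (gmat 1 1) e1) = e1"
    and eH: "e \<in> Hsp" and eo1: "Bf e e1 = 0" and eo2: "Bf e e2 = 0"
    and cN2: "vsmul c (\<rho> (gmat 1 1) e2) = vadd (vadd (vsmul K e1) e2) e"
    and ArgK: "Arg K = pi / 2"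
    and negI: "\<And>v. v \<in> Hsp \<Longrightarrow> \<rho> (- mat 1) v = vsmul c0 v"
begin

lemma c0: "c \<noteq> 0" using c1 by auto

lemma K0: "K \<noteq> 0" using ArgK Arg_zero by auto

lemma ReK: "Re K = 0"
proof -
  have "K = rcis (cmod K) (pi/2)" using rcis_cmod_Arg[of K] ArgK by simp
  then show ?thesis by (metis Re_rcis cos_pi_half mult_zero_right)
qed

lemma e_zero: "e = (\<lambda>n. 0)"
proof -
  have NU: "in_UB (\<rho> (gmat 1 1))" using UBg gmat_SU11[of 1 1] by simp
  have N2H: "\<rho> (gmat 1 1) e2 \<in> Hsp" using UB_Hsp[OF NU e2] .
  have "Bf (vsmul c (\<rho> (gmat 1 1) e2)) (vsmul c (\<rho> (gmat 1 1) e2)) = c * cnj c * Bf (\<rho> (gmat 1 1) e2) (\<rho> (gmat 1 1) e2)"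
    using N2H by simp
  also have "\<dots> = 0" using UB_B[OF NU e2 e2] B22 by simp
  finally have "Bf (vadd (vadd (vsmul K e1) e2) e) (vadd (vadd (vsmul K e1) e2) e) = 0"
    using cN2 by simp
  moreover have "Bf e1 e = 0" "Bf e2 e = 0" using Bf_cnj[OF e1 eH] Bf_cnj[OF e2 eH] eo1 eo2 by simp_all
  ultimately have "K + cnj K + Bf e e = 0"
    using e1 e2 eH eo1 eo2 B11 B12 B21 B22 by (simp add: algebra_simps)
  moreover have "K + cnj K = 0" using ReK by (simp add: complex_add_cnj)
  ultimately have "Bf e e = 0" by simp
  then show ?thesis using negdef_e[OF eH eo1 eo2] by simp
qed

abbreviation "N \<equiv> \<rho> (gmat 1 1)"

lemma NU: "in_UB N" using UBg gmat_SU11[of 1 1] by simp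

lemma N1: "N e1 = vadd (vsmul (1/c) e1) (vsmul 0 e2)"
  using smul_inv[OF c0 cN1] by (simp add: vadd_def vsmul_def)

lemma N2: "N e2 = vadd (vsmul (K/c) e1) (vsmul (1/c) e2)"
  using smul_inv[OF c0 cN2] e_zero by (simp add: vadd_def vsmul_def algebra_simps)

lemma N_S: "gmat 1 1 \<in> S"
  by (rule S_intro) (simp_all add: gmat_SU11 N1 N2 in_Wsp)

lemma diag_S: assumes "t > 0" "t \<noteq> 1" shows "gmat t 0 \<in> S"
proof (rule S_intro)
  show "gmat t 0 \<in> SU11" using assms by (simp add: gmat_SU11)
  obtain m1 where "\<rho> (gmat t 0) e1 = vsmul m1 e1" using fix1[of t 0] assms by (auto simp: fixes_pt_def)
  then show "\<rho> (gmat t 0) e1 \<in> W" using Wsp_smul[OF e1W] by simp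
  obtain m2 where "\<rho> (gmat t 0) e2 = vsmul m2 e2" using fix2[of t] assms by (auto simp: fixes_pt_def)
  then show "\<rho> (gmat t 0) e2 \<in> W" using Wsp_smul[OF e2W] by simp
qed

lemma neg_S: "- mat 1 \<in> S"
  by (rule S_intro) (simp_all add: minus_SU11 negI e1 e2 Wsp_smul e1W e2W)

end



context arg_ctx begin

lemma A_diag: assumes "t > 0" "t \<noteq> 1"
  shows "\<exists>m1 m2. \<rho> (gmat t 0) e1 = vsmul m1 e1 \<and> \<rho> (gmat t 0) e2 = vsmul m2 e2 \<and> m1 * cnj m2 = 1"
proof -
  obtain m1 where h1: "\<rho> (gmat t 0) e1 = vsmul m1 e1" using fix1[of t 0] assms by (auto simp: fixes_pt_def)
  obtain m2 where h2: "\<rho> (gmat t 0) e2 = vsmul m2 e2" using fix2[of t] assms by (auto simp: fixes_pt_def)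
  have AU: "in_UB (\<rho> (gmat t 0))" using UBg gmat_SU11[of t 0] assms by simp
  have "m1 * cnj m2 = Bf (\<rho> (gmat t 0) e1) (\<rho> (gmat t 0) e2)" using h1 h2 e1 e2 B12 by simp
  also have "\<dots> = 1" using UB_B[OF AU e1 e2] B12 by simp
  finally show ?thesis using h1 h2 by blast
qed

lemma hyp: "\<exists>m1 m2. \<rho> (gmat (sqrt 2) 0) e1 = vsmul m1 e1 \<and> \<rho> (gmat (sqrt 2) 0) e2 = vsmul m2 e2
   \<and> cmod m1 \<noteq> 1 \<and> cmod m2 \<noteq> 1"
proof -
  define t where "t = sqrt (2::real)"
  have t0: "t > 0" "t \<noteq> 1" "t \<noteq> 0" and t2: "t\<^sup>2 = 2" by (auto simp: t_def)
  obtain m1 m2 where A1: "\<rho> (gmat t 0) e1 = vsmul m1 e1" and A2: "\<rho> (gmat t 0) e2 = vsmul m2 e2"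
    and mu: "m1 * cnj m2 = 1" using A_diag[OF t0(1,2)] by blast
  have m20: "m2 \<noteq> 0" using mu by auto
  have AU: "in_UB (\<rho> (gmat t 0))" using UBg gmat_SU11[of t 0] t0 by simp
  have N2U: "in_UB (\<rho> (gmat 1 2))" using UBg gmat_SU11[of 1 2] by simp
  have SA: "gmat t 0 \<in> SU11" and SN: "gmat 1 1 \<in> SU11" and SN2: "gmat 1 2 \<in> SU11"
    using t0 by (simp_all add: gmat_SU11)
  obtain k1 where k1c: "cmod k1 = 1" and k1: "\<forall>v\<in>Hsp. \<rho> (gmat t 0 ** gmat 1 1) v = vsmul k1 (\<rho> (gmat t 0) (N v))"
    using MUL[OF SA SN] by blast
  obtain k2 where k2: "\<forall>v\<in>Hsp. \<rho> (gmat 1 2 ** gmat t 0) v = vsmul k2 (\<rho> (gmat 1 2) (\<rho> (gmat t 0) v))"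
    using MUL[OF SN2 SA] by blast
  obtain k3 where k3: "\<forall>v\<in>Hsp. \<rho> (gmat 1 1 ** gmat 1 1) v = vsmul k3 (N (N v))"
    using MUL[OF SN SN] by blast
  have eqm: "gmat t 0 ** gmat 1 1 = gmat 1 2 ** gmat t 0" using M2[OF t0(3)] t2 by simp
  have AN: "\<rho> (gmat t 0) (N e2) = vadd (vsmul (K/c*m1 + 1/c*0) e1) (vsmul (K/c*0 + 1/c*m2) e2)"
    unfolding N2 by (rule lin_comb[OF UB_lin[OF AU]]) (simp_all add: A1 A2 vadd_def vsmul_def)
  have NN: "N (N e2) = vadd (vsmul (K/c*(1/c) + 1/c*(K/c)) e1) (vsmul (K/c*0 + 1/c*(1/c)) e2)"
    unfolding N2 by (rule lin_comb[OF UB_lin[OF NU] N1 N2])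
  have "vsmul k1 (\<rho> (gmat t 0) (N e2)) = vsmul k2 (\<rho> (gmat 1 2) (\<rho> (gmat t 0) e2))"
    using k1 k2 e2 eqm by metis
  also have "\<rho> (gmat 1 2) (\<rho> (gmat t 0) e2) = vsmul m2 (\<rho> (gmat 1 2) e2)"
    unfolding A2 by (rule lin_smul[OF UB_lin[OF N2U] e2])
  also have "\<rho> (gmat 1 2) e2 = vsmul k3 (N (N e2))" using k3 e2 M1 by metis
  finally have "vadd (vsmul (k1 * (K/c*m1 + 1/c*0)) e1) (vsmul (k1 * (K/c*0 + 1/c*m2)) e2)
      = vadd (vsmul (k2*(m2*(k3*(K/c*(1/c) + 1/c*(K/c))))) e1) (vsmul (k2*(m2*(k3*(K/c*0 + 1/c*(1/c))))) e2)"
    unfolding AN NN by (simp only: smul_comb)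
  then have E1: "k1 * (K/c*m1) = k2*m2*k3*(2*K/c^2)" and E2: "k1 * (m2/c) = k2*m2*k3/c^2"
    using comb_eq by (auto simp: power2_eq_square algebra_simps)
  have k10: "k1 \<noteq> 0" using k1c by auto
  have "k1 * (K/c*m1) = 2*K * (k2*m2*k3/c^2)" using E1 by (simp add: algebra_simps)
  also have "\<dots> = 2*K * (k1 * (m2/c))" using E2 by simp
  finally have "k1 * K * m1 / c = k1 * K * (2 * m2) / c" by (simp add: algebra_simps)
  then have m12: "m1 = 2 * m2" using k10 K0 c0 by simp
  have h: "2 * (m2 * cnj m2) = 1" using mu m12 by (simp add: mult.assoc)
  have "complex_of_real (2 * (cmod m2)\<^sup>2) = 2 * complex_of_real ((cmod m2)\<^sup>2)"
    by (simp only: of_real_mult of_real_numeral)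
  also have "\<dots> = 2 * (m2 * cnj m2)" by (simp only: mult_cnj_cmod)
  also have "\<dots> = 1" by (rule h)
  finally have "2 * (cmod m2)\<^sup>2 = 1" by (simp only: of_real_eq_1_iff)
  then have r2: "(cmod m2)\<^sup>2 = 1/2" by simp
  have "cmod m1 = 2 * cmod m2" using m12 by (simp add: norm_mult)
  then have r1: "(cmod m1)\<^sup>2 = 2" using r2 by (simp add: power2_eq_square)
  have "cmod m1 \<noteq> 1" using r1 by auto
  moreover have "cmod m2 \<noteq> 1" using r2 by auto
  ultimately show ?thesis using A1 A2 unfolding t_def by blast
qed

end



context arg_ctx begin

lemma wm_S: "wm \<in> S"
proof -
  define t where "t = sqrt (2::real)"
  have t0: "t > 0" "t \<noteq> 1" "t \<noteq> 0" "1/t > 0" "1/t \<noteq> 1" by (auto simp: t_def)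
  obtain m1 m2 where A1: "\<rho> (gmat t 0) e1 = vsmul m1 e1" and A2: "\<rho> (gmat t 0) e2 = vsmul m2 e2"
    and m1: "cmod m1 \<noteq> 1" and m2: "cmod m2 \<noteq> 1" using hyp unfolding t_def by blast
  obtain n1 n2 where B1: "\<rho> (gmat (1/t) 0) e1 = vsmul n1 e1" and B2: "\<rho> (gmat (1/t) 0) e2 = vsmul n2 e2"
    using A_diag[OF t0(4,5)] by blast
  have AU: "in_UB (\<rho> (gmat t 0))" using UBg gmat_SU11[of t 0] t0 by simp
  have WU: "in_UB (\<rho> wm)" using UBg wm_SU11 by simp
  have SA: "gmat t 0 \<in> SU11" and SA': "gmat (1/t) 0 \<in> SU11"
    using t0 by (simp_all add: gmat_SU11)
  obtain k4 where k4c: "cmod k4 = 1" and k4: "\<forall>v\<in>Hsp. \<rho> (gmat t 0 ** wm) v = vsmul k4 (\<rho> (gmat t 0) (\<rho> wm v))"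
    using MUL[OF SA wm_SU11] by blast
  obtain k5 where k5: "\<forall>v\<in>Hsp. \<rho> (wm ** gmat (1/t) 0) v = vsmul k5 (\<rho> wm (\<rho> (gmat (1/t) 0) v))"
    using MUL[OF wm_SU11 SA'] by blast
  have k40: "k4 \<noteq> 0" using k4c by auto
  have eqm: "gmat t 0 ** wm = wm ** gmat (1/t) 0" using M3[OF t0(3)] .
  have key: "\<rho> wm y \<in> W" if yH: "y \<in> Hsp" and yy: "Bf y y = 0" and Ay: "\<rho> (gmat (1/t) 0) y = vsmul n y" for y n
  proof -
    have xH: "\<rho> wm y \<in> Hsp" using UB_Hsp[OF WU yH] .
    have "vsmul k4 (\<rho> (gmat t 0) (\<rho> wm y)) = vsmul k5 (\<rho> wm (\<rho> (gmat (1/t) 0) y))"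
      using k4 k5 yH eqm by metis
    also have "\<rho> wm (\<rho> (gmat (1/t) 0) y) = vsmul n (\<rho> wm y)"
      unfolding Ay by (rule lin_smul[OF UB_lin[OF WU] yH])
    finally have "vsmul k4 (\<rho> (gmat t 0) (\<rho> wm y)) = vsmul (k5 * n) (\<rho> wm y)"
      by (simp add: smul_smul)
    then have Ax: "\<rho> (gmat t 0) (\<rho> wm y) = vsmul (1/k4 * (k5 * n)) (\<rho> wm y)"
      using smul_inv[OF k40] smul_smul by metis
    have "Bf (\<rho> wm y) (\<rho> wm y) = 0" using UB_B[OF WU yH yH] yy by simp
    then show ?thesis by (rule eigen_in_W[OF AU A1 A2 m1 m2 xH Ax])
  qed
  show ?thesis
    by (rule S_intro[OF wm_SU11 key[OF e1 B11 B1] key[OF e2 B22 B2]])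
qed

lemma diag_S_all: "t > 0 \<Longrightarrow> gmat t 0 \<in> S"
proof (cases "t = 1")
  case True
  have "gmat 2 0 ** gmat (1/2) 0 \<in> S" by (rule S_mult) (simp_all add: diag_S)
  then show ?thesis using M4 True by simp
qed (simp add: diag_S)

lemma unip_pos: "b > 0 \<Longrightarrow> gmat 1 b \<in> S"
proof -
  assume b: "b > 0"
  define t where "t = sqrt b"
  have t: "t > 0" "t \<noteq> 0" "t\<^sup>2 = b" using b by (auto simp: t_def)
  have "(gmat t 0 ** gmat 1 1) ** gmat (1/t) 0 \<in> S"
    using t by (intro S_mult diag_S_all N_S) simp_all
  then show ?thesis using M5[OF t(2)] t(3) by simp
qed

lemma unip_S: "gmat 1 b \<in> S"
proof -
  have I: "gmat 1 0 \<in> S" using diag_S_all[of 1] by simp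
  consider "b > 0" | "b = 0" | "b < 0" by linarith
  then show ?thesis
  proof cases
    case 1 then show ?thesis by (rule unip_pos)
  next
    case 2 then show ?thesis using I by simp
  next
    case 3
    have g: "gmat 1 (-b) \<in> S" using 3 by (intro unip_pos) simp
    show ?thesis by (rule S_inv[OF g gmat_SU11]) (simp_all add: M6 I)
  qed
qed

lemma tri_S: "l > 0 \<Longrightarrow> gmat l b \<in> S"
  using S_mult[OF diag_S_all unip_S, of l "b/l"] M7[of l b] by simp

lemma gx_pos_S:
  fixes p q r s :: real
  assumes "p * s + q * r = 1" "r > 0 \<or> (r = 0 \<and> p > 0)"
  shows "gx (of_real p) (\<i> * of_real q) (\<i> * of_real r) (of_real s) \<in> S"
  using assms(2)
proof
  assume r: "r > 0"
  have "(gmat 1 (-p/r) ** wm) ** gmat r (-s) \<in> S"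
    using r by (intro S_mult tri_S wm_S) simp_all
  then show ?thesis using M8[OF _ assms(1)] r by simp
next
  assume r: "r = 0 \<and> p > 0"
  then have "gx (of_real p) (\<i> * of_real q) 0 (of_real s) = gmat p q" using M9[of p s q] assms(1) by simp
  then show ?thesis using r tri_S[of p q] by simp
qed

lemma all_S: assumes g: "g \<in> SU11" shows "g \<in> S"
proof -
  obtain p q r s :: real where ps: "p * s + q * r = 1"
    and gg: "g = gx (of_real p) (\<i> * of_real q) (\<i> * of_real r) (of_real s)"
    using SU11_form[OF g] by blast
  show ?thesis
  proof (cases "r > 0 \<or> (r = 0 \<and> p > 0)")
    case True then show ?thesis using gx_pos_S[OF ps] gg by simp
  next
    case False
    have p0: "r = 0 \<Longrightarrow> p \<noteq> 0" using ps by auto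
    have c2: "-r > 0 \<or> (-r = 0 \<and> -p > 0)" using False p0 by auto
    have ps2: "(-p) * (-s) + (-q) * (-r) = 1" using ps by simp
    have "- mat 1 ** gx (of_real (-p)) (\<i> * of_real (-q)) (\<i> * of_real (-r)) (of_real (-s)) \<in> S"
      by (rule S_mult[OF neg_S gx_pos_S[OF ps2 c2]])
    then show ?thesis unfolding M10 gg by simp
  qed
qed

end



context iso_pair begin

lemma hyp_line: "cx_hyp_line (Wsp e1 e2)"
proof -
  define s where "s = complex_of_real (1 / sqrt 2)"
  have cs: "cnj s = s" by (simp add: s_def)
  have ss: "s * s = 1/2" by (simp add: s_def flip: of_real_mult)
  have s0: "s \<noteq> 0" by (simp add: s_def)
  define v where "v = vadd (vsmul s e1) (vsmul s e2)"
  define w where "w = vadd (vsmul s e1) (vsmul (-s) e2)"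
  have vH: "v \<in> Hsp" and wH: "w \<in> Hsp" using e1 e2 by (simp_all add: v_def w_def)
  have "Bf v v = 2 * (s * s)" using e1 e2 B11 B12 B21 B22 cs by (simp add: v_def)
  then have vv: "Bf v v = 1" using ss by simp
  have "Bf w w = - 2 * (s * s)" using e1 e2 B11 B12 B21 B22 cs by (simp add: w_def)
  then have ww: "Bf w w = -1" using ss by simp
  have vw: "Bf v w = 0" using e1 e2 B11 B12 B21 B22 cs by (simp add: v_def w_def)
  have comb: "vadd (vsmul a v) (vsmul b w) = vadd (vsmul (s*(a+b)) e1) (vsmul (s*(a-b)) e2)" for a b
    by (simp add: v_def w_def vadd_def vsmul_def algebra_simps)
  have "Wsp e1 e2 = {vadd (vsmul a v) (vsmul b w) | a b. True}"
  proof
    show "{vadd (vsmul a v) (vsmul b w) | a b. True} \<subseteq> Wsp e1 e2"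
      unfolding comb using in_Wsp by blast
    show "Wsp e1 e2 \<subseteq> {vadd (vsmul a v) (vsmul b w) | a b. True}"
    proof
      fix z assume "z \<in> Wsp e1 e2"
      then obtain \<alpha> \<beta> where z: "z = vadd (vsmul \<alpha> e1) (vsmul \<beta> e2)" unfolding Wsp_def by blast
      have "s * ((\<alpha> + \<beta>) / (2 * s) + (\<alpha> - \<beta>) / (2 * s)) = \<alpha>"
        and "s * ((\<alpha> + \<beta>) / (2 * s) - (\<alpha> - \<beta>) / (2 * s)) = \<beta>"
        using s0 by (simp_all add: field_simps)
      then have "z = vadd (vsmul ((\<alpha> + \<beta>) / (2 * s)) v) (vsmul ((\<alpha> - \<beta>) / (2 * s)) w)"
        unfolding comb z by simp
      then show "z \<in> {vadd (vsmul a v) (vsmul b w) | a b. True}" by blast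
    qed
  qed
  then show ?thesis unfolding cx_hyp_line_def using vH wH vv ww vw by blast
qed

end

theorem mainTheorem11:
  fixes \<rho> :: "complex^2^2 \<Rightarrow> (nat \<Rightarrow> complex) \<Rightarrow> (nat \<Rightarrow> complex)"
  assumes "proj_rep \<rho>"
    and "orbitally_continuous \<rho>"
    and "non_elementary \<rho>"
    and "Arg_is \<rho> (pi / 2)"
  shows "\<exists>W. cx_hyp_line W \<and> (\<forall>g\<in>SU11. \<rho> g ` W = W)"
proof -
  obtain \<eta>1 \<eta>2 c K e where h1: "\<eta>1 \<in> Hsp" and h2: "\<eta>2 \<in> Hsp"
    and b11: "Bf \<eta>1 \<eta>1 = 0" and b22: "Bf \<eta>2 \<eta>2 = 0" and b12: "Bf \<eta>1 \<eta>2 = 1"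
    and f1: "\<forall>l b. l > 0 \<longrightarrow> fixes_pt (\<rho> (gmat l b)) \<eta>1"
    and f2: "\<forall>l. l > 0 \<and> l \<noteq> 1 \<longrightarrow> fixes_pt (\<rho> (gmat l 0)) \<eta>2"
    and c1: "cmod c = 1" and cN1: "vsmul c (\<rho> (gmat 1 1) \<eta>1) = \<eta>1"
    and eH: "e \<in> Hsp" and eo1: "Bf e \<eta>1 = 0" and eo2: "Bf e \<eta>2 = 0"
    and cN2: "vsmul c (\<rho> (gmat 1 1) \<eta>2) = vadd (vadd (vsmul K \<eta>1) \<eta>2) e"
    and ArgK: "Arg K = pi / 2"
    using assms(4) unfolding Arg_is_def by blast
  have P1: "\<And>g. g \<in> SU11 \<Longrightarrow> in_UB (\<rho> g)"
    and P2: "\<And>g h. g \<in> SU11 \<Longrightarrow> h \<in> SU11 \<Longrightarrow> \<exists>c. cmod c = 1 \<and> (\<forall>v\<in>Hsp. \<rho> (g ** h) v = vsmul c (\<rho> g (\<rho> h v)))"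
    using assms(1) unfolding proj_rep_def by blast+
  obtain c0 where P3: "\<And>v. v \<in> Hsp \<Longrightarrow> \<rho> (- mat 1) v = vsmul c0 v"
    using assms(1) unfolding proj_rep_def by blast
  interpret arg_ctx \<eta>1 \<eta>2 \<rho> c K c0 e
    by (unfold_locales) (use h1 h2 b11 b22 b12 P1 P2 f1 f2 c1 cN1 eH eo1 eo2 cN2 ArgK P3 in auto)
  have "\<forall>g\<in>SU11. \<rho> g ` Wsp \<eta>1 \<eta>2 = Wsp \<eta>1 \<eta>2" using all_S by (simp add: S_def)
  then show ?thesis using hyp_line by blast
qed


end
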